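(* Let $\lambda>0$, $X\in\mathbb R^{\mathbf m\times\mathbf n}$, and define on $\mathbb R^{\mathbf m\times\mathbf r}\times\mathbb R^{\mathbf r\times\mathbf n}$ $$f(U,V)=\tfrac12\|X-UV\|_F^2+\tfrac{\lambda}{2}\|I_{\mathbf r}-VV^\top\|_F^2,\quad \varphi_1(U,V)=\tfrac12\|U\|_F^2,\quad \varphi_2(U,V)=\tfrac{6\lambda}{4}\|V\|_F^4+\tfrac12\varepsilon(U)\|V\|_F^2,$$ with $\varepsilon(U)=\max\{\|U^\top U\|,2\lambda\}$ ($\|\cdot\|$ the spectral norm). (1) For any $\bar U\in\mathbb R^{\mathbf m\times\mathbf r}$, $V\in\mathbb R^{\mathbf r\times\mathbf n}$ and $L_1>0$, $$\arg\min_{U\ge0}\Big\{\langle\nabla_Uf(\bar U,V),U\rangle+L_1D_{\varphi_1(\cdot,V)}(U,\bar U)\Big\}=\max\Big(\bar U-\tfrac1{L_1}\big(\bar UVV^\top-XV^\top\big),0\Big).$$ (2) For any $\bar V\in\mathbb R^{\mathbf r\times\mathbf n}$, $U\in\mathbb R^{\mathbf m\times\mathbf r}$ and $L_2>0$, $$\arg\min_{V\ge0}\Big\{\langle\nabla_Vf(U,\bar V),V\rangle+L_2D_{\varphi_2(U,\cdot)}(V,\bar V)\Big\}=\tfrac1\rho\max(G(\bar V),0),$$ where $$G(\bar V)=\nabla_V\varphi_2(U,\bar V)-\tfrac1{L_2}\nabla_Vf(U,\bar V)=(6\lambda\|\bar V\|_F^2+\varepsilon(U))\bar V-\tfrac1{L_2}\big(U^\top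 U\bar V-U^\top X+2\lambda(\bar V\bar V^\top\bar V-\bar V)\big),$$ and $\rho$ is the unique real solution of $\rho^2(\rho-a)=c$ with $a=\varepsilon(U)$ and $c=6\lambda\|\max(G(\bar V),0)\|_F^2$, which is given in closed form by $$\rho=\frac a3+\sqrt[3]{\frac{c+\sqrt\Delta}{2}+\frac{a^3}{27}}+\sqrt[3]{\frac{c-\sqrt\Delta}{2}+\frac{a^3}{27}},\qquad \Delta=c^2+\tfrac4{27}ca^3.$$
   Context: Inner products are Frobenius (trace) inner products; $U\ge0$, $V\ge0$ denote entrywise nonnegativity; $\max(\cdot,0)$ is taken entrywise. For a differentiable convex $\psi$, the Bregman divergence is $D_\psi(x,y)=\psi(x)-\psi(y)-\langle\nabla\psi(y),x-y\rangle$; here $D_{\varphi_1(\cdot,V)}$ is the divergence of $U\mapsto\varphi_1(U,V)$ and $D_{\varphi_2(U,\cdot)}$ that of $V\mapsto\varphi_2(U,V)$. *)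

theory Defs
  imports "HOL-Analysis.Analysis"
begin

text \<open>Matrices are rendered as \<open>real^'c^'r\<close> (rows indexed by 'r, columns by 'c).
  The inner product on this type is the Frobenius inner product and \<open>norm\<close>
  is the Frobenius norm.\<close>

definition grad :: "('a::real_inner \<Rightarrow> real) \<Rightarrow> 'a \<Rightarrow> 'a" where
  "grad \<psi> y = (THE g. (\<psi> has_derivative (\<lambda>h. g \<bullet> h)) (at y))"

definition bregman :: "('a::real_inner \<Rightarrow> real) \<Rightarrow> 'a \<Rightarrow> 'a \<Rightarrow> real" where
  "bregman \<psi> x y = \<psi> x - \<psi> y - grad \<psi> y \<bullet> (x - y)"

definition mat_nonneg :: "real^'c^'r \<Rightarrow> bool" where
  "mat_nonneg A \<longleftrightarrow> (\<forall>i j. 0 \<le> A $ i $ j)"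

definition mat_pos :: "real^'c^'r \<Rightarrow> real^'c^'r" where
  "mat_pos A = (\<chi> i j. max (A $ i $ j) 0)"

definition spec_norm :: "real^'c^'r \<Rightarrow> real" where
  "spec_norm A = onorm (\<lambda>x. A *v x)"

definition argmin_on :: "('a \<Rightarrow> real) \<Rightarrow> 'a set \<Rightarrow> 'a set" where
  "argmin_on F S = {x \<in> S. \<forall>y\<in>S. F x \<le> F y}"

definition nmf_f :: "real \<Rightarrow> real^'n^'m \<Rightarrow> real^'r^'m \<Rightarrow> real^'n^'r \<Rightarrow> real" where
  "nmf_f lam X U V = (1/2) * (norm (X - U ** V))^2
     + (lam/2) * (norm (mat 1 - V ** transpose V))^2"

definition eps :: "real \<Rightarrow> real^'r^'m \<Rightarrow> real" where
  "eps lam U = max (spec_norm (transpose U ** U)) (2*lam)"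

definition phi1 :: "real^'r^'m \<Rightarrow> real^'n^'r \<Rightarrow> real" where
  "phi1 U V = (1/2) * (norm U)^2"

definition phi2 :: "real \<Rightarrow> real^'r^'m \<Rightarrow> real^'n^'r \<Rightarrow> real" where
  "phi2 lam U V = (6*lam/4) * (norm V)^4 + (1/2) * eps lam U * (norm V)^2"

end

theory Submission
  imports Defs
begin


lemma grad_eqI:
  fixes g :: "'a::real_inner"
  assumes "(\<psi> has_derivative (\<lambda>h. g \<bullet> h)) (at y)"
  shows "grad \<psi> y = g"
  unfolding grad_def
proof (rule the_equality)
  show "(\<psi> has_derivative (\<lambda>h. g \<bullet> h)) (at y)" by fact
next
  fix g' assume "(\<psi> has_derivative (\<lambda>h. g' \<bullet> h)) (at y)"
  then have "(\<lambda>h. g' \<bullet> h) = (\<lambda>h. g \<bullet> h)" using assms has_derivative_unique by blast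
  then have "(g' - g) \<bullet> (g' - g) = 0" by (metis inner_diff_left right_minus_eq)
  then show "g' = g" by simp
qed

lemma mm_norm_le:
  fixes A :: "real^'n^'m" and B :: "real^'p^'n"
  shows "norm (A ** B) \<le> norm A * norm B * (CARD('m) * CARD('p) * CARD('n))"
proof -
  have e: "\<bar>(A ** B) $ i $ j\<bar> \<le> CARD('n) * (norm A * norm B)" for i j
  proof -
    have "\<bar>(A ** B) $ i $ j\<bar> = \<bar>\<Sum>k\<in>UNIV. A$i$k * B$k$j\<bar>"
      by (simp add: matrix_matrix_mult_def)
    also have "\<dots> \<le> (\<Sum>k\<in>UNIV. \<bar>A$i$k\<bar> * \<bar>B$k$j\<bar>)"
      unfolding abs_mult[symmetric] by (rule sum_abs)
    also have "\<dots> \<le> (\<Sum>k\<in>(UNIV::'n set). norm A * norm B)"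
    proof (rule sum_mono)
      fix k
      have "\<bar>A$i$k\<bar> \<le> norm A" by (rule order_trans[OF component_le_norm_cart[of "A$i" k] Finite_Cartesian_Product.norm_nth_le])
      moreover have "\<bar>B$k$j\<bar> \<le> norm B" by (rule order_trans[OF component_le_norm_cart[of "B$k" j] Finite_Cartesian_Product.norm_nth_le])
      ultimately show "\<bar>A$i$k\<bar> * \<bar>B$k$j\<bar> \<le> norm A * norm B"
        by (simp add: mult_mono')
    qed
    finally show ?thesis by simp
  qed
  have "norm (A ** B) \<le> (\<Sum>i\<in>UNIV. norm ((A ** B) $ i))" unfolding norm_vec_def by (rule L2_set_le_sum) simp
  also have "\<dots> \<le> (\<Sum>i\<in>(UNIV::'m set). \<Sum>j\<in>(UNIV::'p set). CARD('n) * (norm A * norm B))"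
  proof (rule sum_mono)
    fix i
    have "norm ((A ** B) $ i) \<le> (\<Sum>j\<in>UNIV. \<bar>(A ** B) $ i $ j\<bar>)" by (rule norm_le_l1_cart)
    also have "\<dots> \<le> (\<Sum>j\<in>(UNIV::'p set). CARD('n) * (norm A * norm B))"
      by (rule sum_mono) (rule e)
    finally show "norm ((A ** B) $ i) \<le> (\<Sum>j\<in>(UNIV::'p set). CARD('n) * (norm A * norm B))" .
  qed
  also have "\<dots> = norm A * norm B * (CARD('m) * CARD('p) * CARD('n))" by simp
  finally show ?thesis .
qed

lemma bb_mm: "bounded_bilinear (\<lambda>(A::real^'n^'m) (B::real^'p^'n). A ** B)"
proof
  fix a a' :: "real^'n^'m" and b b' :: "real^'p^'n" and r :: real
  show "(a + a') ** b = a ** b + a' ** b"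
    by (vector matrix_matrix_mult_def sum.distrib[symmetric] field_simps)
  show "a ** (b + b') = a ** b + a ** b'" by (rule matrix_add_ldistrib)
  show "(r *\<^sub>R a) ** b = r *\<^sub>R (a ** b)" by (simp add: scalar_matrix_assoc)
  show "a ** (r *\<^sub>R b) = r *\<^sub>R (a ** b)" by (simp add: matrix_scalar_ac scalar_matrix_assoc)
  show "\<exists>K. \<forall>(a::real^'n^'m) (b::real^'p^'n). norm (a ** b) \<le> norm a * norm b * K"
    using mm_norm_le by blast
qed

lemmas mm_deriv = bounded_bilinear.FDERIV[OF bb_mm]
lemmas mm_diff_left = bounded_bilinear.diff_left[OF bb_mm]
lemmas mm_diff_right = bounded_bilinear.diff_right[OF bb_mm]
lemmas mm_add_left = bounded_bilinear.add_left[OF bb_mm]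
lemmas mm_minus_left = bounded_bilinear.minus_left[OF bb_mm]
lemmas mm_minus_right = bounded_bilinear.minus_right[OF bb_mm]

lemma transpose_add: "transpose (A + B) = transpose A + transpose (B::real^'n^'m)"
  by (simp add: transpose_def vec_eq_iff)
lemma transpose_diff: "transpose (A - B) = transpose A - transpose (B::real^'n^'m)"
  by (simp add: transpose_def vec_eq_iff)
lemma transpose_minus: "transpose (- A) = - transpose (A::real^'n^'m)"
  by (simp add: transpose_def vec_eq_iff)

lemma bl_transpose: "bounded_linear (transpose :: real^'n^'m \<Rightarrow> real^'m^'n)"
  apply (rule linear_conv_bounded_linear[THEN iffD1])
  apply (rule linearI) by (simp_all add: transpose_add transpose_scalar)

lemma inner_mm_right:
  fixes A :: "real^'p^'m" and B :: "real^'n^'m" and H :: "real^'p^'n"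
  shows "A \<bullet> (B ** H) = (transpose B ** A) \<bullet> H"
proof -
  have "A \<bullet> (B ** H) = (\<Sum>i\<in>UNIV. \<Sum>k\<in>UNIV. \<Sum>j\<in>UNIV. A$i$k * B$i$j * H$j$k)"
    by (simp add: inner_vec_def matrix_matrix_mult_def sum_distrib_left mult_ac)
  also have "\<dots> = (\<Sum>i\<in>UNIV. \<Sum>j\<in>UNIV. \<Sum>k\<in>UNIV. A$i$k * B$i$j * H$j$k)"
    by (rule sum.cong[OF refl], rule sum.swap)
  also have "\<dots> = (\<Sum>j\<in>UNIV. \<Sum>i\<in>UNIV. \<Sum>k\<in>UNIV. A$i$k * B$i$j * H$j$k)"
    by (rule sum.swap)
  also have "\<dots> = (\<Sum>j\<in>UNIV. \<Sum>k\<in>UNIV. \<Sum>i\<in>UNIV. A$i$k * B$i$j * H$j$k)"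
    by (rule sum.cong[OF refl], rule sum.swap)
  also have "\<dots> = (\<Sum>j\<in>UNIV. \<Sum>k\<in>UNIV. (\<Sum>i\<in>UNIV. B$i$j * A$i$k) * H$j$k)"
    unfolding sum_distrib_right by (intro sum.cong refl) (simp add: mult_ac)
  also have "\<dots> = (transpose B ** A) \<bullet> H"
    by (simp add: inner_vec_def matrix_matrix_mult_def transpose_def)
  finally show ?thesis .
qed

lemma inner_transpose: "transpose A \<bullet> transpose B = A \<bullet> (B::real^'n^'m)"
  unfolding inner_vec_def transpose_def by (simp, rule sum.swap)

lemma inner_mm_left:
  fixes A :: "real^'p^'m" and B :: "real^'p^'n" and H :: "real^'n^'m"
  shows "A \<bullet> (H ** B) = (A ** transpose B) \<bullet> H"
proof -
  have "A \<bullet> (H ** B) = transpose A \<bullet> transpose (H ** B)" by (simp only: inner_transpose)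
  also have "\<dots> = transpose A \<bullet> (transpose B ** transpose H)" by (simp only: matrix_transpose_mul)
  also have "\<dots> = (B ** transpose A) \<bullet> transpose H" by (simp only: inner_mm_right transpose_transpose)
  also have "\<dots> = transpose (B ** transpose A) \<bullet> transpose (transpose H)" by (simp only: inner_transpose)
  also have "\<dots> = (A ** transpose B) \<bullet> H" by (simp only: matrix_transpose_mul transpose_transpose)
  finally show ?thesis .
qed



lemma sqnorm_deriv:
  assumes "(F has_derivative F') (at y)"
  shows "((\<lambda>W. (norm (F W))^2) has_derivative (\<lambda>h. 2 * (F y \<bullet> F' h))) (at y)"
proof -
  have "((\<lambda>W. F W \<bullet> F W) has_derivative (\<lambda>h. F y \<bullet> F' h + F' h \<bullet> F y)) (at y)"
    using has_derivative_inner[OF assms assms] .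
  then show ?thesis unfolding power2_norm_eq_inner
    by (rule has_derivative_eq_rhs) (simp add: fun_eq_iff inner_commute)
qed

lemma deriv_phi1: "((\<lambda>W. phi1 W V) has_derivative (\<lambda>h. Ub \<bullet> h)) (at Ub)"
proof -
  have "((\<lambda>W. (1/2) * (norm W)^2) has_derivative (\<lambda>h. (1/2) * (2 * (Ub \<bullet> h)))) (at Ub)"
    by (intro has_derivative_mult_right sqnorm_deriv[OF has_derivative_id, simplified])
  then show ?thesis unfolding phi1_def by (rule has_derivative_eq_rhs) simp
qed

lemma deriv_phi2: "((\<lambda>W. phi2 lam U W) has_derivative
   (\<lambda>h. ((6*lam * (norm Vb)^2 + eps lam U) *\<^sub>R Vb) \<bullet> h)) (at Vb)"
proof -
  have sq: "((\<lambda>W. (norm W)^2) has_derivative (\<lambda>h. 2 * (Vb \<bullet> h))) (at Vb)"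
    using sqnorm_deriv[OF has_derivative_id] by simp
  have d: "((\<lambda>W. (6*lam/4) * ((norm W)^2)^2 + (1/2) * eps lam U * (norm W)^2) has_derivative
     (\<lambda>h. (6*lam/4) * (of_nat 2 * (2 * (Vb \<bullet> h)) * ((norm Vb)^2)^(2-1)) + (1/2) * eps lam U * (2 * (Vb \<bullet> h)))) (at Vb)"
    by (intro has_derivative_add has_derivative_mult_right has_derivative_power sq)
  have e: "\<And>W::real^'n^'r. norm W ^ 4 = ((norm W)^2)^2" by simp
  show ?thesis unfolding phi2_def e
    by (rule has_derivative_eq_rhs[OF d]) (auto simp: fun_eq_iff algebra_simps power2_eq_square)
qed

lemma N_sym: "transpose (Vb ** transpose Vb - mat 1) = Vb ** transpose Vb - (mat 1 :: real^'r^'r)"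
  for Vb :: "real^'n^'r"
  by (simp add: transpose_diff matrix_transpose_mul)

lemma deriv_fU:
  fixes X :: "real^'n^'m" and V :: "real^'n^'r" and Ub :: "real^'r^'m"
  shows "((\<lambda>W. nmf_f lam X W V) has_derivative
   (\<lambda>h. (Ub ** V ** transpose V - X ** transpose V) \<bullet> h)) (at Ub)"
proof -
  have d1: "((\<lambda>W. X - W ** V) has_derivative (\<lambda>h. 0 - (Ub ** 0 + h ** V))) (at Ub)"
    by (intro has_derivative_diff has_derivative_const mm_deriv has_derivative_ident)
  have "((\<lambda>W. (1/2) * (norm (X - W ** V))^2 + (lam/2) * (norm (mat 1 - V ** transpose V))^2) has_derivative
     (\<lambda>h. (1/2) * (2 * ((X - Ub ** V) \<bullet> (0 - (Ub ** 0 + h ** V)))) + 0)) (at Ub)"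
    by (intro has_derivative_add has_derivative_mult_right sqnorm_deriv[OF d1] has_derivative_const)
  then show ?thesis unfolding nmf_f_def
  proof (rule has_derivative_eq_rhs)
    show "(\<lambda>h. (1/2) * (2 * ((X - Ub ** V) \<bullet> (0 - (Ub ** 0 + h ** V)))) + 0) =
      (\<lambda>h. (Ub ** V ** transpose V - X ** transpose V) \<bullet> h)"
    proof
      fix h :: "real^'r^'m"
      have "(1/2) * (2 * ((X - Ub ** V) \<bullet> (0 - (Ub ** 0 + h ** V)))) + 0 = (Ub ** V - X) \<bullet> (h ** V)"
        by (simp add: inner_diff_left inner_minus_right)
      also have "\<dots> = ((Ub ** V - X) ** transpose V) \<bullet> h" by (rule inner_mm_left)
      also have "\<dots> = (Ub ** V ** transpose V - X ** transpose V) \<bullet> h" by (simp add: mm_diff_left)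
      finally show "(1/2) * (2 * ((X - Ub ** V) \<bullet> (0 - (Ub ** 0 + h ** V)))) + 0 =
          (Ub ** V ** transpose V - X ** transpose V) \<bullet> h" .
    qed
  qed
qed

lemma deriv_fV:
  fixes X :: "real^'n^'m" and Vb :: "real^'n^'r" and U :: "real^'r^'m"
  shows "((\<lambda>W. nmf_f lam X U W) has_derivative
   (\<lambda>h. (transpose U ** U ** Vb - transpose U ** X
                              + (2*lam) *\<^sub>R (Vb ** transpose Vb ** Vb - Vb)) \<bullet> h)) (at Vb)"
proof -
  have d1: "((\<lambda>W. X - U ** W) has_derivative (\<lambda>h. 0 - (U ** h + 0 ** Vb))) (at Vb)"
    by (intro has_derivative_diff has_derivative_const mm_deriv has_derivative_ident)
  have dt: "((\<lambda>W. transpose W) has_derivative (\<lambda>h. transpose h)) (at Vb)"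
    by (rule bounded_linear_imp_has_derivative[OF bl_transpose])
  have d2: "((\<lambda>W. mat 1 - W ** transpose W) has_derivative (\<lambda>h. 0 - (Vb ** transpose h + h ** transpose Vb))) (at Vb)"
    by (intro has_derivative_diff has_derivative_const mm_deriv has_derivative_ident dt)
  have "((\<lambda>W. (1/2) * (norm (X - U ** W))^2 + (lam/2) * (norm (mat 1 - W ** transpose W))^2) has_derivative
     (\<lambda>h. (1/2) * (2 * ((X - U ** Vb) \<bullet> (0 - (U ** h + 0 ** Vb)))) +
          (lam/2) * (2 * ((mat 1 - Vb ** transpose Vb) \<bullet> (0 - (Vb ** transpose h + h ** transpose Vb)))))) (at Vb)"
    by (intro has_derivative_add has_derivative_mult_right sqnorm_deriv[OF d1] sqnorm_deriv[OF d2])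
  then show ?thesis unfolding nmf_f_def
  proof (rule has_derivative_eq_rhs)
    let ?N = "Vb ** transpose Vb - mat 1"
    show "(\<lambda>h. (1/2) * (2 * ((X - U ** Vb) \<bullet> (0 - (U ** h + 0 ** Vb)))) +
          (lam/2) * (2 * ((mat 1 - Vb ** transpose Vb) \<bullet> (0 - (Vb ** transpose h + h ** transpose Vb))))) =
      (\<lambda>h. (transpose U ** U ** Vb - transpose U ** X
                              + (2*lam) *\<^sub>R (Vb ** transpose Vb ** Vb - Vb)) \<bullet> h)"
    proof
      fix h :: "real^'n^'r"
      have a: "(1/2) * (2 * ((X - U ** Vb) \<bullet> (0 - (U ** h + 0 ** Vb)))) = (U ** Vb - X) \<bullet> (U ** h)"
        by (simp add: inner_diff_left inner_minus_right)
      also have "\<dots> = (transpose U ** (U ** Vb - X)) \<bullet> h" by (rule inner_mm_right)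
      also have "\<dots> = (transpose U ** U ** Vb - transpose U ** X) \<bullet> h"
        by (simp add: mm_diff_right matrix_mul_assoc)
      finally have A: "(1/2) * (2 * ((X - U ** Vb) \<bullet> (0 - (U ** h + 0 ** Vb)))) = (transpose U ** U ** Vb - transpose U ** X) \<bullet> h" .
      have b1: "?N \<bullet> (h ** transpose Vb) = (?N ** Vb) \<bullet> h"
        using inner_mm_left[of ?N h "transpose Vb"] by simp
      have "?N \<bullet> (Vb ** transpose h) = (transpose Vb ** ?N) \<bullet> transpose h" by (rule inner_mm_right)
      also have "\<dots> = transpose (transpose Vb ** ?N) \<bullet> transpose (transpose h)" by (simp only: inner_transpose)
      also have "\<dots> = (transpose ?N ** Vb) \<bullet> h" by (simp only: matrix_transpose_mul transpose_transpose)
      also have "\<dots> = (?N ** Vb) \<bullet> h" by (simp only: N_sym)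
      finally have b2: "?N \<bullet> (Vb ** transpose h) = (?N ** Vb) \<bullet> h" .
      have NV: "?N ** Vb = Vb ** transpose Vb ** Vb - Vb" by (simp add: mm_diff_left)
      have B: "(lam/2) * (2 * ((mat 1 - Vb ** transpose Vb) \<bullet> (0 - (Vb ** transpose h + h ** transpose Vb))))
          = ((2*lam) *\<^sub>R (Vb ** transpose Vb ** Vb - Vb)) \<bullet> h"
      proof -
        have "(mat 1 - Vb ** transpose Vb) \<bullet> (0 - (Vb ** transpose h + h ** transpose Vb))
            = ?N \<bullet> (Vb ** transpose h) + ?N \<bullet> (h ** transpose Vb)"
          by (simp add: inner_diff_left inner_diff_right inner_add_right inner_minus_right algebra_simps)
        also have "\<dots> = 2 * ((Vb ** transpose Vb ** Vb - Vb) \<bullet> h)" using b1 b2 NV by simp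
        finally show ?thesis by simp
      qed
      show "(1/2) * (2 * ((X - U ** Vb) \<bullet> (0 - (U ** h + 0 ** Vb)))) +
          (lam/2) * (2 * ((mat 1 - Vb ** transpose Vb) \<bullet> (0 - (Vb ** transpose h + h ** transpose Vb)))) =
          (transpose U ** U ** Vb - transpose U ** X
                              + (2*lam) *\<^sub>R (Vb ** transpose Vb ** Vb - Vb)) \<bullet> h"
        unfolding A B by (simp add: inner_add_left)
    qed
  qed
qed



lemma argmin_unique:
  assumes "x0 \<in> S" and k: "k > 0" and "\<And>y. y \<in> S \<Longrightarrow> F y \<ge> F x0 + k * (norm (y - x0))^2"
  shows "argmin_on F S = {x0}"
proof
  have "F x0 \<le> F y" if "y \<in> S" for y
  proof -
    have "0 \<le> k * (norm (y - x0))^2" using k by simp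
    then show ?thesis using assms(3)[OF that] by linarith
  qed
  then show "{x0} \<subseteq> argmin_on F S"
    using assms(1) unfolding argmin_on_def by auto
next
  show "argmin_on F S \<subseteq> {x0}"
  proof
    fix x assume "x \<in> argmin_on F S"
    then have x: "x \<in> S" "F x \<le> F x0" using assms(1) unfolding argmin_on_def by auto
    then have "k * (norm (x - x0))^2 \<le> 0" using assms(3)[OF x(1)] by linarith
    then have "(norm (x - x0))^2 \<le> 0" using k by (simp add: mult_le_0_iff)
    then show "x \<in> {x0}" by simp
  qed
qed

lemma proj_ineq:
  fixes U P :: "real^'c^'r"
  assumes "mat_nonneg U"
  shows "(U - mat_pos P) \<bullet> (mat_pos P - P) \<ge> 0"
  using assms unfolding inner_vec_def mat_pos_def mat_nonneg_def
  by (auto intro!: sum_nonneg simp: max_def mult_nonneg_nonpos mult_nonpos_nonpos)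

lemma pos_orth:
  fixes P :: "real^'c^'r"
  shows "(mat_pos P - P) \<bullet> mat_pos P = 0"
  unfolding inner_vec_def mat_pos_def
  by (auto intro!: sum.neutral simp: max_def)

lemma pos_nonneg: "mat_nonneg (mat_pos P)"
  unfolding mat_pos_def mat_nonneg_def by simp

lemma part1_core:
  fixes g Ub :: "real^'c^'r"
  assumes L: "L > 0"
  shows "argmin_on (\<lambda>U. g \<bullet> U + L * ((1/2) * (norm U)^2 - (1/2) * (norm Ub)^2 - Ub \<bullet> (U - Ub)))
     {U. mat_nonneg U} = {mat_pos (Ub - (1/L) *\<^sub>R g)}"
proof (rule argmin_unique[where k = "L/2"])
  define P where "P = Ub - (1/L) *\<^sub>R g"
  define W where "W = mat_pos P"
  have g: "g = L *\<^sub>R (Ub - P)" using L unfolding P_def by simp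
  show "mat_pos (Ub - (1/L) *\<^sub>R g) \<in> {U. mat_nonneg U}" by (simp add: pos_nonneg)
  show "L/2 > 0" using L by simp
  fix U :: "real^'c^'r" assume U: "U \<in> {U. mat_nonneg U}"
  let ?F = "\<lambda>U. g \<bullet> U + L * ((1/2) * (norm U)^2 - (1/2) * (norm Ub)^2 - Ub \<bullet> (U - Ub))"
  have id: "?F U - ?F W = L * ((1/2) * (norm (U - W))^2 + (U - W) \<bullet> (W - P))"
    unfolding g power2_norm_eq_inner
    by (simp add: inner_diff_left inner_diff_right inner_commute algebra_simps)
  have "(U - W) \<bullet> (W - P) \<ge> 0" using proj_ineq U unfolding W_def by auto
  then have "L * ((1/2) * (norm (U - W))^2 + (U - W) \<bullet> (W - P)) \<ge> L * ((1/2) * (norm (U - W))^2)"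
    by (intro mult_left_mono) (simp_all add: L less_imp_le)
  then have "?F U - ?F W \<ge> L/2 * (norm (U - W))^2" unfolding id by simp
  then show "?F U \<ge> ?F (mat_pos (Ub - (1/L) *\<^sub>R g)) + L/2 * (norm (U - mat_pos (Ub - (1/L) *\<^sub>R g)))^2"
    unfolding W_def P_def by simp
qed

lemma quartic:
  fixes V W :: "'a::real_inner"
  shows "(norm V)^4 \<ge> (norm W)^4 + 4 * (norm W)^2 * (W \<bullet> (V - W))"
proof -
  define x where "x = V \<bullet> V"
  define w where "w = W \<bullet> W"
  define p where "p = W \<bullet> V"
  have "0 \<le> (V - W) \<bullet> (V - W)" by simp
  then have h1: "2 * p \<le> x + w" unfolding x_def w_def p_def
    by (simp add: inner_diff_left inner_diff_right inner_commute)
  have w0: "w \<ge> 0" unfolding w_def by simp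
  have h2: "4 * w * p \<le> 2 * w * (x + w)" using mult_left_mono[OF h1 w0] by (simp add: algebra_simps)
  have h3: "0 \<le> (x - w)^2" by simp
  have e4: "\<And>z::'a. (norm z)^4 = (z \<bullet> z)^2"
    by (metis power2_norm_eq_inner power_mult num_double numeral_times_numeral mult_2_right numeral_Bit0 power_even_eq)
  have "(norm W)^4 + 4 * (norm W)^2 * (W \<bullet> (V - W)) = w^2 + 4 * w * (p - w)"
    unfolding e4 power2_norm_eq_inner w_def p_def by (simp add: inner_diff_right)
  also have "\<dots> \<le> x^2" using h2 h3 by (simp add: power2_eq_square algebra_simps)
  also have "x^2 = (norm V)^4" unfolding e4 x_def ..
  finally show ?thesis .
qed



lemma cardano:
  fixes a c :: real
  assumes a: "a > 0" and c: "c \<ge> 0"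
  defines "\<Delta> \<equiv> c^2 + (4/27) * c * a^3"
  defines "\<rho> \<equiv> a/3 + root 3 ((c + sqrt \<Delta>)/2 + a^3/27) + root 3 ((c - sqrt \<Delta>)/2 + a^3/27)"
  shows "\<rho> > 0 \<and> \<rho>^2 * (\<rho> - a) = c"
proof -
  define A where "A = (c + sqrt \<Delta>)/2 + a^3/27"
  define B where "B = (c - sqrt \<Delta>)/2 + a^3/27"
  define u where "u = root 3 A"
  define w where "w = root 3 B"
  have D0: "\<Delta> \<ge> 0" unfolding \<Delta>_def using a c by simp
  have sq: "(sqrt \<Delta>)^2 = \<Delta>" using D0 by simp
  have u3: "u^3 = A" unfolding u_def by (simp add: odd_real_root_pow)
  have w3: "w^3 = B" unfolding w_def by (simp add: odd_real_root_pow)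
  have AB: "A * B = (a^2/9)^3"
  proof -
    have g: "((c+s)/2 + a^3/27) * ((c-s)/2 + a^3/27) = (c/2 + a^3/27)^2 - s^2/4" for s :: real
      by (simp add: field_simps power2_eq_square)
    have "A * B = (c/2 + a^3/27)^2 - (sqrt \<Delta>)^2/4" unfolding A_def B_def by (rule g)
    also have "\<dots> = (c/2 + a^3/27)^2 - \<Delta>/4" by (simp only: sq)
    also have "\<dots> = (a^2/9)^3" unfolding \<Delta>_def by (simp add: field_simps power2_eq_square power3_eq_cube)
    finally show ?thesis .
  qed
  have rr: "root 3 ((a^2/9)^3) = a^2/9" by (rule odd_real_root_power_cancel) simp
  have uw: "u * w = a^2/9"
    unfolding u_def w_def real_root_mult[symmetric] AB rr ..
  have A0: "A > 0" unfolding A_def using a c D0 by (simp add: add_nonneg_pos)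
  have u0: "u > 0" unfolding u_def using A0 by simp
  have w0: "w > 0"
  proof -
    have "a^2/9 > 0" using a by simp
    then have "u * w > 0" unfolding uw .
    then show ?thesis using u0 by (simp add: zero_less_mult_iff)
  qed
  define y where "y = u + w"
  have y3: "y^3 = c + 2*a^3/27 + (a^2/3) * y"
  proof -
    have "y^3 = u^3 + w^3 + 3*(u*w)*(u+w)" unfolding y_def by (simp add: power3_eq_cube algebra_simps)
    also have "\<dots> = A + B + (a^2/3) * y" unfolding u3 w3 uw y_def by simp
    also have "A + B = c + 2*a^3/27" unfolding A_def B_def by (simp add: field_simps)
    finally show ?thesis .
  qed
  have r: "\<rho> = a/3 + y" unfolding \<rho>_def y_def u_def w_def A_def B_def by simp
  have "\<rho>^2 * (\<rho> - a) = y^3 - (a^2/3) * y - 2*a^3/27" unfolding r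
    by (simp add: power2_eq_square power3_eq_cube field_simps)
  also have "\<dots> = c" using y3 by simp
  finally show ?thesis using r u0 w0 a unfolding y_def by simp
qed

lemma cubic_unique:
  fixes a c t r :: real
  assumes a: "a > 0" and c: "c \<ge> 0" and t: "t > 0" "t^2 * (t - a) = c" and r: "r > 0" "r^2 * (r - a) = c"
  shows "t = r"
proof -
  have ta: "t \<ge> a"
  proof (rule ccontr)
    assume "\<not> t \<ge> a" then have "t^2 * (t - a) < 0" using t(1) by (simp add: mult_pos_neg)
    then show False using t(2) c by simp
  qed
  have ra: "r \<ge> a"
  proof (rule ccontr)
    assume "\<not> r \<ge> a" then have "r^2 * (r - a) < 0" using r(1) by (simp add: mult_pos_neg)
    then show False using r(2) c by simp
  qed
  have "(t - r) * (t * (t - a) + r * (r - a) + t * r) = t^2 * (t - a) - r^2 * (r - a)"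
    by (simp add: power2_eq_square algebra_simps)
  also have "\<dots> = 0" using t(2) r(2) by simp
  finally have e: "(t - r) * (t * (t - a) + r * (r - a) + t * r) = 0" .
  have "t * (t - a) \<ge> 0" "r * (r - a) \<ge> 0" "t * r > 0" using ta ra t(1) r(1) by simp_all
  then have "t * (t - a) + r * (r - a) + t * r > 0" by linarith
  then show ?thesis using e by simp
qed

lemma part2_core:
  fixes G :: "real^'c^'r"
  assumes lam: "lam > 0" and a: "a > 0" and r: "\<rho> > 0" "\<rho>^2 * (\<rho> - a) = 6*lam*(norm (mat_pos G))^2"
    and V: "mat_nonneg V"
  defines "H \<equiv> \<lambda>V. (6*lam/4) * (norm V)^4 + (1/2) * a * (norm V)^2 - G \<bullet> V"
  shows "H V \<ge> H ((1/\<rho>) *\<^sub>R mat_pos G) + (a/2) * (norm (V - (1/\<rho>) *\<^sub>R mat_pos G))^2"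
proof -
  define W where "W = (1/\<rho>) *\<^sub>R mat_pos G"
  define Gp where "Gp = mat_pos G"
  have nW: "(norm W)^2 = (norm Gp)^2 / \<rho>^2" unfolding W_def Gp_def using r(1)
    by (simp add: power_divide)
  have key: "(6*lam*(norm W)^2 + a) *\<^sub>R W = Gp"
  proof -
    have "\<rho>^3 = 6*lam*(norm Gp)^2 + a * \<rho>^2" using r(2) unfolding Gp_def
      by (simp add: power2_eq_square power3_eq_cube algebra_simps)
    then have "6*lam*(norm W)^2 + a = \<rho>" unfolding nW using r(1)
      by (simp add: field_simps power2_eq_square power3_eq_cube)
    then show ?thesis unfolding W_def Gp_def using r(1) by simp
  qed
  have q: "(norm V)^4 \<ge> (norm W)^4 + 4 * (norm W)^2 * (W \<bullet> (V - W))" by (rule quartic)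
  have sq: "(norm V)^2 = (norm W)^2 + 2 * (W \<bullet> (V - W)) + (norm (V - W))^2"
    unfolding power2_norm_eq_inner by (simp add: inner_diff_left inner_diff_right inner_commute)
  have o1: "(Gp - G) \<bullet> V \<ge> 0"
    using V unfolding Gp_def mat_pos_def mat_nonneg_def inner_vec_def
    by (auto intro!: sum_nonneg simp: max_def)
  have o2: "(Gp - G) \<bullet> Gp = 0" unfolding Gp_def by (rule pos_orth)
  have o3: "(Gp - G) \<bullet> (V - W) \<ge> 0"
    using o1 o2 unfolding W_def Gp_def by (simp add: inner_diff_right)
  have lin: "(6*lam*(norm W)^2 + a) * (W \<bullet> (V - W)) = Gp \<bullet> (V - W)"
    by (metis key inner_scaleR_left)
  have "H V - H W = (6*lam/4) * ((norm V)^4 - (norm W)^4) + (1/2) * a * ((norm V)^2 - (norm W)^2) - G \<bullet> (V - W)"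
    unfolding H_def by (simp add: inner_diff_right algebra_simps)
  also have "\<dots> \<ge> (6*lam/4) * (4 * (norm W)^2 * (W \<bullet> (V - W))) + (1/2) * a * (2 * (W \<bullet> (V - W)) + (norm (V - W))^2) - G \<bullet> (V - W)"
  proof -
    have "(6*lam/4) * ((norm V)^4 - (norm W)^4) \<ge> (6*lam/4) * (4 * (norm W)^2 * (W \<bullet> (V - W)))"
      by (rule mult_left_mono) (use q lam in auto)
    moreover have "(norm V)^2 - (norm W)^2 = 2 * (W \<bullet> (V - W)) + (norm (V - W))^2" using sq by simp
    ultimately show ?thesis by simp
  qed
  finally have "H V - H W \<ge> (6*lam*(norm W)^2 + a) * (W \<bullet> (V - W)) - G \<bullet> (V - W) + (a/2) * (norm (V - W))^2"
    by (simp add: algebra_simps)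
  then have "H V - H W \<ge> (Gp - G) \<bullet> (V - W) + (a/2) * (norm (V - W))^2"
    unfolding lin by (simp add: inner_diff_left)
  then show ?thesis using o3 unfolding W_def by linarith
qed

theorem proposition5p2:
  fixes lam :: real and X :: "real^'n^'m"
  assumes lam: "lam > 0"
  shows
   "(\<forall>(Ub :: real^'r^'m) (V :: real^'n^'r) L1. L1 > 0 \<longrightarrow>
      argmin_on
        (\<lambda>U. grad (\<lambda>W. nmf_f lam X W V) Ub \<bullet> U + L1 * bregman (\<lambda>W. phi1 W V) U Ub)
        {U. mat_nonneg U}
      = {mat_pos (Ub - (1/L1) *\<^sub>R (Ub ** V ** transpose V - X ** transpose V))})
  \<and>
   (\<forall>(Vb :: real^'n^'r) (U :: real^'r^'m) L2. L2 > 0 \<longrightarrow>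
      (let G = grad (\<lambda>W. phi2 lam U W) Vb - (1/L2) *\<^sub>R grad (\<lambda>W. nmf_f lam X U W) Vb;
           a = eps lam U;
           c = 6*lam * (norm (mat_pos G))^2;
           \<Delta> = c^2 + (4/27) * c * a^3;
           \<rho> = a/3 + root 3 ((c + sqrt \<Delta>)/2 + a^3/27) + root 3 ((c - sqrt \<Delta>)/2 + a^3/27)
       in G = (6*lam * (norm Vb)^2 + a) *\<^sub>R Vb
                - (1/L2) *\<^sub>R (transpose U ** U ** Vb - transpose U ** X
                              + (2*lam) *\<^sub>R (Vb ** transpose Vb ** Vb - Vb))
        \<and> \<rho> > 0 \<and> \<rho>^2 * (\<rho> - a) = c
        \<and> (\<forall>t::real. t > 0 \<and> t^2 * (t - a) = c \<longrightarrow> t = \<rho>)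
        \<and> argmin_on
            (\<lambda>V. grad (\<lambda>W. nmf_f lam X U W) Vb \<bullet> V + L2 * bregman (\<lambda>W. phi2 lam U W) V Vb)
            {V. mat_nonneg V}
          = {(1/\<rho>) *\<^sub>R mat_pos G}))"
  proof (intro conjI allI impI)
  fix Ub :: "real^'r^'m" and V :: "real^'n^'r" and L1 :: real
  assume L1: "L1 > 0"
  have g1: "grad (\<lambda>W. nmf_f lam X W V) Ub = Ub ** V ** transpose V - X ** transpose V"
    by (rule grad_eqI[OF deriv_fU])
  have g2: "grad (\<lambda>W. phi1 W V) Ub = Ub" by (rule grad_eqI[OF deriv_phi1])
  have br: "bregman (\<lambda>W. phi1 W V) U Ub = (1/2) * (norm U)^2 - (1/2) * (norm Ub)^2 - Ub \<bullet> (U - Ub)" for U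
    unfolding bregman_def g2 by (simp add: phi1_def)
  show "argmin_on
        (\<lambda>U. grad (\<lambda>W. nmf_f lam X W V) Ub \<bullet> U + L1 * bregman (\<lambda>W. phi1 W V) U Ub)
        {U. mat_nonneg U}
      = {mat_pos (Ub - (1/L1) *\<^sub>R (Ub ** V ** transpose V - X ** transpose V))}"
    unfolding g1 br by (rule part1_core[OF L1])
next
  fix Vb :: "real^'n^'r" and U :: "real^'r^'m" and L2 :: real
  assume L2: "L2 > 0"
  define a where "a = eps lam U"
  have a0: "a > 0" unfolding a_def eps_def using lam by simp
  define gp where "gp = grad (\<lambda>W. phi2 lam U W) Vb"
  define gf where "gf = grad (\<lambda>W. nmf_f lam X U W) Vb"
  have gp: "gp = (6*lam * (norm Vb)^2 + a) *\<^sub>R Vb"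
    unfolding gp_def a_def by (rule grad_eqI[OF deriv_phi2])
  have gf: "gf = transpose U ** U ** Vb - transpose U ** X
                              + (2*lam) *\<^sub>R (Vb ** transpose Vb ** Vb - Vb)"
    unfolding gf_def by (rule grad_eqI[OF deriv_fV])
  define G where "G = gp - (1/L2) *\<^sub>R gf"
  define c where "c = 6*lam * (norm (mat_pos G))^2"
  define \<Delta> where "\<Delta> = c^2 + (4/27) * c * a^3"
  define \<rho> where "\<rho> = a/3 + root 3 ((c + sqrt \<Delta>)/2 + a^3/27) + root 3 ((c - sqrt \<Delta>)/2 + a^3/27)"
  have c0: "c \<ge> 0" unfolding c_def using lam by simp
  have card: "\<rho> > 0 \<and> \<rho>^2 * (\<rho> - a) = c" unfolding \<rho>_def \<Delta>_def by (rule cardano[OF a0 c0])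
  have C1: "G = (6*lam * (norm Vb)^2 + a) *\<^sub>R Vb
                - (1/L2) *\<^sub>R (transpose U ** U ** Vb - transpose U ** X
                              + (2*lam) *\<^sub>R (Vb ** transpose Vb ** Vb - Vb))"
    unfolding G_def gp gf ..
  have C3: "\<forall>t::real. t > 0 \<and> t^2 * (t - a) = c \<longrightarrow> t = \<rho>"
    using cubic_unique[OF a0 c0] card by blast
  define H where "H = (\<lambda>V::real^'n^'r. (6*lam/4) * (norm V)^4 + (1/2) * a * (norm V)^2 - G \<bullet> V)"
  define F where "F = (\<lambda>V. gf \<bullet> V + L2 * bregman (\<lambda>W. phi2 lam U W) V Vb)"
  define K where "K = L2 * (gp \<bullet> Vb - phi2 lam U Vb)"
  have FH: "F V = L2 * H V + K" for V
  proof -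
    have "L2 * ((1/L2) * (gf \<bullet> V)) = gf \<bullet> V" using L2 by simp
    then show ?thesis
      unfolding F_def H_def K_def bregman_def G_def gp_def[symmetric]
      by (simp add: phi2_def a_def inner_diff_left inner_diff_right algebra_simps)
  qed
  have C4: "argmin_on F {V. mat_nonneg V} = {(1/\<rho>) *\<^sub>R mat_pos G}"
  proof (rule argmin_unique[where k = "L2 * a / 2"])
    show "(1/\<rho>) *\<^sub>R mat_pos G \<in> {V. mat_nonneg V}"
      using card unfolding mat_nonneg_def mat_pos_def by simp
    show "L2 * a / 2 > 0" using L2 a0 by simp
    fix V :: "real^'n^'r" assume V: "V \<in> {V. mat_nonneg V}"
    have "H V \<ge> H ((1/\<rho>) *\<^sub>R mat_pos G) + (a/2) * (norm (V - (1/\<rho>) *\<^sub>R mat_pos G))^2"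
      unfolding H_def
      by (rule part2_core[OF lam a0 card[THEN conjunct1] card[THEN conjunct2, unfolded c_def]]) (use V in simp)
    then have "L2 * H V \<ge> L2 * (H ((1/\<rho>) *\<^sub>R mat_pos G) + (a/2) * (norm (V - (1/\<rho>) *\<^sub>R mat_pos G))^2)"
      using L2 by (simp add: mult_left_mono)
    then show "F V \<ge> F ((1/\<rho>) *\<^sub>R mat_pos G) + L2 * a / 2 * (norm (V - (1/\<rho>) *\<^sub>R mat_pos G))^2"
      unfolding FH by (simp add: algebra_simps)
  qed
  have gf_fold: "grad (\<lambda>W. nmf_f lam X U W) Vb = gf" unfolding gf_def ..
  have gp_fold: "grad (\<lambda>W. phi2 lam U W) Vb = gp" unfolding gp_def ..
  show "let G = grad (\<lambda>W. phi2 lam U W) Vb - (1/L2) *\<^sub>R grad (\<lambda>W. nmf_f lam X U W) Vb;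
           a = eps lam U;
           c = 6*lam * (norm (mat_pos G))^2;
           \<Delta> = c^2 + (4/27) * c * a^3;
           \<rho> = a/3 + root 3 ((c + sqrt \<Delta>)/2 + a^3/27) + root 3 ((c - sqrt \<Delta>)/2 + a^3/27)
       in G = (6*lam * (norm Vb)^2 + a) *\<^sub>R Vb
                - (1/L2) *\<^sub>R (transpose U ** U ** Vb - transpose U ** X
                              + (2*lam) *\<^sub>R (Vb ** transpose Vb ** Vb - Vb))
        \<and> \<rho> > 0 \<and> \<rho>^2 * (\<rho> - a) = c
        \<and> (\<forall>t::real. t > 0 \<and> t^2 * (t - a) = c \<longrightarrow> t = \<rho>)
        \<and> argmin_on
            (\<lambda>V. grad (\<lambda>W. nmf_f lam X U W) Vb \<bullet> V + L2 * bregman (\<lambda>W. phi2 lam U W) V Vb)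
            {V. mat_nonneg V}
          = {(1/\<rho>) *\<^sub>R mat_pos G}"
    unfolding Let_def gf_fold gp_fold G_def[symmetric] a_def[symmetric] c_def[symmetric]
      \<Delta>_def[symmetric] \<rho>_def[symmetric] F_def[symmetric]
    using C1 card C3 C4 by blast
qed

end
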